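(* Let $d\ge1$, $1\le p<q<\infty$, and let $f(x):=|x|^{-d/q}$ for $x\in\mathbb{R}^d\setminus\{0\}$ ($|x|$ the Euclidean norm). Define $g:=\chi_{\{|x|<1\}}f$, $h:=f-g=\chi_{\{|x|\ge1\}}f$, and $k:=-f+2g$. Then $$\|f\|_{\mathcal{M}^p_q}=\|g\|_{\mathcal{M}^p_q}=\|h\|_{\mathcal{M}^p_q}=\|k\|_{\mathcal{M}^p_q}\in(0,\infty).$$
   Context: For $1\le p\le q<\infty$, the Morrey space $\mathcal{M}^p_q=\mathcal{M}^p_q(\mathbb{R}^d)$ is the Banach space of all measurable functions $f$ on $\mathbb{R}^d$ with $$\|f\|_{\mathcal{M}^p_q}:=\sup_{B=B(a,r)}|B|^{\frac1q-\frac1p}\Big(\int_B|f(y)|^p\,dy\Big)^{1/p}<\infty,$$ the supremum taken over all Euclidean balls $B(a,r)$ with center $a\in\mathbb{R}^d$ and radius $r>0$, and $|B|$ the Lebesgue measure of $B$. *)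

theory Defs
  imports "HOL-Analysis.Analysis"
begin

definition morrey_local :: "('a::euclidean_space \<Rightarrow> real) \<Rightarrow> real \<Rightarrow> real \<Rightarrow> 'a \<Rightarrow> real \<Rightarrow> ennreal" where
  "morrey_local f p q a r =
     (let I = (\<integral>\<^sup>+ y\<in>ball a r. ennreal (\<bar>f y\<bar> powr p) \<partial>lebesgue)
      in if I = \<infinity> then \<infinity>
         else ennreal ((measure lebesgue (ball a r)) powr (1/q - 1/p) * (enn2real I) powr (1/p)))"

definition morrey_norm :: "('a::euclidean_space \<Rightarrow> real) \<Rightarrow> real \<Rightarrow> real \<Rightarrow> ennreal" where
  "morrey_norm f p q = (SUP a. SUP r\<in>{0<..}. morrey_local f p q a r)"

end

theory Submission
  imports Defs
begin



lemma nn_integral_scale_lebesgue: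
  fixes f :: "'a::euclidean_space \<Rightarrow> ennreal" and t :: real
  assumes f[measurable]: "f \<in> borel_measurable lebesgue" and t: "t \<noteq> 0"
  shows "(\<integral>\<^sup>+x. f x \<partial>lebesgue) = ennreal (\<bar>t\<bar> ^ DIM('a)) * (\<integral>\<^sup>+x. f (t *\<^sub>R x) \<partial>lebesgue)"
proof -
  have L: "lebesgue = density (distr lebesgue lebesgue (\<lambda>x::'a. t *\<^sub>R x)) (\<lambda>_. ennreal (\<bar>t\<bar> ^ DIM('a)))"
    using lebesgue_affine_euclidean[where c="\<lambda>_::'a. t" and t=0] t
    unfolding scaleR_scaleR[symmetric] scaleR_sum_right[symmetric] euclidean_representation
    by (simp add: prod_constant)
  have "(\<integral>\<^sup>+x. f x \<partial>lebesgue) = (\<integral>\<^sup>+x. f x \<partial>density (distr lebesgue lebesgue (\<lambda>x::'a. t *\<^sub>R x)) (\<lambda>_. ennreal (\<bar>t\<bar> ^ DIM('a))))"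
    using L by simp
  also have "\<dots> = \<integral>\<^sup>+ x. ennreal (\<bar>t\<bar> ^ DIM('a)) * f x \<partial>distr lebesgue lebesgue (\<lambda>x. t *\<^sub>R x)"
    by (subst nn_integral_density) auto
  also have "\<dots> = ennreal (\<bar>t\<bar> ^ DIM('a)) * integral\<^sup>N (distr lebesgue lebesgue (\<lambda>x::'a. t *\<^sub>R x)) f"
    using f measurable_distr_eq1 nn_integral_cmult by blast
  also have "\<dots> = ennreal (\<bar>t\<bar> ^ DIM('a)) * (\<integral>\<^sup>+x. f (t *\<^sub>R x) \<partial>lebesgue)"
    by (subst nn_integral_distr) auto
  finally show ?thesis .
qed





lemma ball_borel'[measurable]: "ball (a::'a::euclidean_space) r \<in> sets borel" by auto
lemma ball_leb[measurable]: "ball (a::'a::euclidean_space) r \<in> sets lebesgue"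
  using lmeasurable_ball by (simp add: fmeasurable_def)

definition Nf :: "real \<Rightarrow> 'a::euclidean_space \<Rightarrow> ennreal" where
  "Nf \<alpha> y = ennreal (norm y powr (- \<alpha>))"

definition JN :: "real \<Rightarrow> 'a::euclidean_space \<Rightarrow> real \<Rightarrow> ennreal" where
  "JN \<alpha> a r = (\<integral>\<^sup>+ y\<in>ball a r. Nf \<alpha> y \<partial>lebesgue)"

lemma Nf_meas[measurable]: "Nf \<alpha> \<in> borel_measurable lebesgue"
  unfolding Nf_def[abs_def] by (intro measurable_completion) measurable

lemma indicator_ball_scale:
  fixes a x :: "'a::euclidean_space"
  assumes "t > 0"
  shows "indicator (ball (t *\<^sub>R a) (t * r)) (t *\<^sub>R x) = (indicator (ball a r) x :: ennreal)"
proof -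
  have "dist (t *\<^sub>R a) (t *\<^sub>R x) = t * dist a x"
    using assms by (simp add: dist_norm flip: scaleR_diff_right)
  then show ?thesis using assms by (simp add: indicator_def)
qed

lemma JN_scale:
  fixes a :: "'a::euclidean_space"
  assumes t: "t > 0"
  shows "JN \<alpha> (t *\<^sub>R a) (t * r) = ennreal (t powr (real DIM('a) - \<alpha>)) * JN \<alpha> a r"
proof -
  have "JN \<alpha> (t *\<^sub>R a) (t * r) = ennreal (\<bar>t\<bar> ^ DIM('a)) *
      (\<integral>\<^sup>+x. Nf \<alpha> (t *\<^sub>R x) * indicator (ball (t *\<^sub>R a) (t * r)) (t *\<^sub>R x) \<partial>lebesgue)"
    unfolding JN_def using t by (intro nn_integral_scale_lebesgue) auto
  also have "\<dots> = ennreal (t ^ DIM('a)) *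
      (\<integral>\<^sup>+x. ennreal (t powr (- \<alpha>)) * (Nf \<alpha> x * indicator (ball a r) x) \<partial>lebesgue)"
  proof -
    have eq: "Nf \<alpha> (t *\<^sub>R x) = ennreal (t powr (- \<alpha>)) * Nf \<alpha> x" for x
      using t by (simp add: Nf_def powr_mult ennreal_mult)
    have "(\<integral>\<^sup>+x. Nf \<alpha> (t *\<^sub>R x) * indicator (ball (t *\<^sub>R a) (t * r)) (t *\<^sub>R x) \<partial>lebesgue)
       = (\<integral>\<^sup>+x. ennreal (t powr (- \<alpha>)) * (Nf \<alpha> x * indicator (ball a r) x) \<partial>lebesgue)"
      by (rule nn_integral_cong) (simp only: eq indicator_ball_scale[OF t] mult.assoc)
    then show ?thesis using t by simp
  qed
  also have "\<dots> = ennreal (t ^ DIM('a)) * (ennreal (t powr (- \<alpha>)) * JN \<alpha> a r)"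
    unfolding JN_def by (subst nn_integral_cmult) auto
  also have "\<dots> = ennreal (t ^ DIM('a) * t powr (- \<alpha>)) * JN \<alpha> a r"
    using t by (simp add: ennreal_mult mult.assoc)
  also have "t ^ DIM('a) * t powr (- \<alpha>) = t powr (real DIM('a) - \<alpha>)"
    using t by (simp add: powr_realpow[symmetric] powr_add[symmetric])
  finally show ?thesis .
qed




lemma emeasure_ball_leb: "emeasure lebesgue (ball (a::'a::euclidean_space) r) = ennreal (measure lebesgue (ball a r))"
  using lmeasurable_ball by (simp add: emeasure_eq_measure2)

lemma JN_finite01:
  assumes a0: "0 < \<alpha>" and ad: "\<alpha> < real DIM('a)"
  shows "JN \<alpha> (0::'a::euclidean_space) 1 < \<infinity>"
proof -
  define d where "d = real DIM('a)"
  define \<rho> where "\<rho> = (2::real) powr (\<alpha> - d)"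
  define V1 where "V1 = measure lebesgue (ball (0::'a) 1)"
  define T where "T k y = ennreal (2 powr (\<alpha> * (real k + 1))) * indicator (ball (0::'a) (2 powr (1 - real k))) y" for k y
  have Tm[measurable]: "T k \<in> borel_measurable lebesgue" for k
    unfolding T_def[abs_def] by measurable
  have pt: "Nf \<alpha> y * indicator (ball 0 1) y \<le> (\<Sum>k. T k y)" for y
  proof (cases "y \<in> ball 0 1 \<and> y \<noteq> 0")
    case False
    then show ?thesis by (auto simp: Nf_def indicator_def)
  next
    case True
    define n where "n = norm y"
    have n0: "0 < n" and n1: "n < 1" using True by (auto simp: n_def)
    define L where "L = - log 2 n"
    have L0: "0 < L" using n0 n1 by (simp add: L_def)
    define k where "k = nat \<lfloor>L\<rfloor>"
    have k1: "real k \<le> L" and k2: "L < real k + 1"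
      using L0 by (auto simp: k_def)
    have nL: "n = 2 powr (- L)" using n0 by (simp add: L_def)
    have "n \<le> 2 powr (- real k)" unfolding nL by (rule powr_mono) (use k1 in auto)
    also have "\<dots> < 2 powr (1 - real k)" by (rule powr_less_mono) auto
    finally have yin: "y \<in> ball 0 (2 powr (1 - real k))" by (simp add: n_def)
    have "n powr (- \<alpha>) = 2 powr (\<alpha> * L)" unfolding nL by (simp add: powr_powr mult.commute)
    also have "\<dots> \<le> 2 powr (\<alpha> * (real k + 1))"
      by (rule powr_mono) (use k2 a0 in auto)
    finally have nb: "n powr (- \<alpha>) \<le> 2 powr (\<alpha> * (real k + 1))" .
    have "Nf \<alpha> y * indicator (ball 0 1) y \<le> T k y"
      using True yin nb by (simp add: T_def Nf_def n_def indicator_def ennreal_leI)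
    also have "T k y \<le> (\<Sum>k. T k y)"
      using sum_le_suminf[of "\<lambda>k. T k y" "{k}"] by (simp add: summableI)
    finally show ?thesis .
  qed
  have V1: "emeasure lebesgue (ball (0::'a) 1) = ennreal V1"
    by (simp add: V1_def emeasure_ball_leb)
  have V10: "0 \<le> V1" by (simp add: V1_def)
  have Tint: "(\<integral>\<^sup>+y. T k y \<partial>lebesgue) = ennreal (2 powr (\<alpha> + d) * V1 * \<rho> ^ k)" for k
  proof -
    have "(\<integral>\<^sup>+y. T k y \<partial>lebesgue) = ennreal (2 powr (\<alpha> * (real k + 1))) * emeasure lebesgue (ball (0::'a) (2 powr (1 - real k)))"
      unfolding T_def by (simp add: nn_integral_cmult_indicator)
    also have "\<dots> = ennreal (2 powr (\<alpha> * (real k + 1))) * (ennreal ((2 powr (1 - real k)) ^ DIM('a)) * ennreal V1)"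
      by (subst emeasure_lebesgue_ball_conv_unit_ball) (auto simp: V1)
    also have "\<dots> = ennreal (2 powr (\<alpha> * (real k + 1)) * (2 powr (1 - real k)) ^ DIM('a) * V1)"
      using V10 by (simp add: ennreal_mult mult.assoc)
    also have "2 powr (\<alpha> * (real k + 1)) * (2 powr (1 - real k)) ^ DIM('a) = 2 powr (\<alpha> + d) * \<rho> ^ k"
    proof -
      have "(2 powr (1 - real k)) ^ DIM('a) = (2::real) powr (d * (1 - real k))"
        by (simp add: powr_power d_def)
      moreover have "\<rho> ^ k = 2 powr (real k * (\<alpha> - d))"
        by (simp add: powr_power \<rho>_def)
      moreover have "\<alpha> * (real k + 1) + d * (1 - real k) = (\<alpha> + d) + real k * (\<alpha> - d)"
        by (simp add: algebra_simps)
      ultimately show ?thesis by (simp add: powr_add[symmetric])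
    qed
    finally show ?thesis by (simp add: ac_simps)
  qed
  have \<rho>0: "0 < \<rho>" by (simp add: \<rho>_def)
  have \<rho>1: "\<rho> < 1"
  proof -
    have "\<rho> < 2 powr 0" unfolding \<rho>_def by (rule powr_less_mono) (use ad in \<open>auto simp: d_def\<close>)
    then show ?thesis by simp
  qed
  have summ: "summable (\<lambda>k. 2 powr (\<alpha> + d) * V1 * \<rho> ^ k)"
    using \<rho>0 \<rho>1 by (intro summable_mult summable_geometric) auto
  have "JN \<alpha> (0::'a) 1 \<le> (\<integral>\<^sup>+y. (\<Sum>k. T k y) \<partial>lebesgue)"
    unfolding JN_def by (intro nn_integral_mono pt)
  also have "\<dots> = (\<Sum>k. \<integral>\<^sup>+y. T k y \<partial>lebesgue)"
    by (rule nn_integral_suminf) simp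
  also have "\<dots> = (\<Sum>k. ennreal (2 powr (\<alpha> + d) * V1 * \<rho> ^ k))"
    by (simp add: Tint)
  also have "\<dots> = ennreal (\<Sum>k. 2 powr (\<alpha> + d) * V1 * \<rho> ^ k)"
    using summ \<rho>0 V10 by (intro suminf_ennreal2) auto
  also have "\<dots> < \<infinity>" by simp
  finally show ?thesis .
qed



lemma JN_mono:
  assumes "ball a r \<subseteq> ball b s"
  shows "JN \<alpha> a r \<le> JN \<alpha> b s"
  unfolding JN_def using assms
  by (intro nn_integral_mono) (auto simp: indicator_def)

lemma JN_finite:
  assumes a0: "0 < \<alpha>" and ad: "\<alpha> < real DIM('a)"
  shows "JN \<alpha> (a::'a::euclidean_space) r < \<infinity>"
proof (cases "r \<le> 0")
  case True
  then have e: "ball a r = {}" by auto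
  have "JN \<alpha> a r = 0" unfolding JN_def e by simp
  then show ?thesis by simp
next
  case False
  define R where "R = norm a + r"
  have R0: "R > 0" using False by (simp add: R_def add_nonneg_pos)
  have "ball a r \<subseteq> ball (0::'a) R"
  proof
    fix y assume "y \<in> ball a r"
    then have "dist a y < r" by simp
    moreover have "norm y \<le> norm a + dist a y"
      by (metis dist_norm norm_minus_commute norm_triangle_sub add.commute)
    ultimately show "y \<in> ball 0 R" by (simp add: R_def)
  qed
  then have "JN \<alpha> a r \<le> JN \<alpha> (R *\<^sub>R (0::'a)) (R * 1)" by (simp add: JN_mono)
  also have "\<dots> = ennreal (R powr (real DIM('a) - \<alpha>)) * JN \<alpha> (0::'a) 1"
    using R0 by (rule JN_scale)
  also have "\<dots> < \<infinity>" using JN_finite01[OF a0 ad]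
    by (simp add: ennreal_mult_less_top)
  finally show ?thesis .
qed

definition Jm :: "('a::euclidean_space \<Rightarrow> real) \<Rightarrow> real \<Rightarrow> 'a \<Rightarrow> real \<Rightarrow> ennreal" where
  "Jm u p a r = (\<integral>\<^sup>+ y\<in>ball a r. ennreal (\<bar>u y\<bar> powr p) \<partial>lebesgue)"

lemma morrey_local_alt:
  "morrey_local u p q a r = (if Jm u p a r = \<infinity> then \<infinity> else
     ennreal (measure lebesgue (ball a r) powr (1/q - 1/p) * enn2real (Jm u p a r) powr (1/p)))"
  by (simp add: morrey_local_def Jm_def Let_def)

lemma morrey_local_mono:
  assumes p: "0 < p" and uv: "\<And>y. \<bar>u y\<bar> \<le> \<bar>v y\<bar>"
  shows "morrey_local u p q a r \<le> morrey_local v p q a r"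
proof -
  have J: "Jm u p a r \<le> Jm v p a r"
    unfolding Jm_def using p uv
    by (intro nn_integral_mono mult_right_mono ennreal_leI powr_mono2) auto
  show ?thesis
  proof (cases "Jm v p a r = \<infinity>")
    case True
    then show ?thesis by (simp add: morrey_local_alt[of v])
  next
    case False
    then have Ju: "Jm u p a r \<noteq> \<infinity>" using J by (auto simp: top_unique)
    have "enn2real (Jm u p a r) \<le> enn2real (Jm v p a r)"
      using J False by (simp add: enn2real_mono top.not_eq_extremum)
    then have "enn2real (Jm u p a r) powr (1/p) \<le> enn2real (Jm v p a r) powr (1/p)"
      using p by (intro powr_mono2) auto
    then show ?thesis using False Ju
      by (simp add: morrey_local_alt ennreal_leI mult_left_mono)
  qed
qed

lemma morrey_norm_mono:
  assumes p: "0 < p" and uv: "\<And>y. \<bar>u y\<bar> \<le> \<bar>v y\<bar>"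
  shows "morrey_norm u p q \<le> morrey_norm v p q"
  unfolding morrey_norm_def
  by (intro SUP_mono' morrey_local_mono[OF assms]) 

lemma vol_ball:
  assumes "r \<ge> 0"
  shows "measure lebesgue (ball (a::'a::euclidean_space) r) = r ^ DIM('a) * measure lebesgue (ball (0::'a) 1)"
  using content_ball_conv_unit_ball[OF assms, of a] by simp

lemma vol_ball_pos: "r > 0 \<Longrightarrow> measure lebesgue (ball (a::'a::euclidean_space) r) > 0"
  using content_ball_pos[of r a] by simp

lemma morrey_local_f:
  fixes u :: "'a::euclidean_space \<Rightarrow> real"
  assumes uf: "\<And>y. ennreal (\<bar>u y\<bar> powr p) = Nf \<alpha> y" and a0: "0 < \<alpha>" and ad: "\<alpha> < real DIM('a)"
  shows "morrey_local u p q a r = ennreal (measure lebesgue (ball a r) powr (1/q - 1/p) * enn2real (JN \<alpha> a r) powr (1/p))"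
proof -
  have "Jm u p a r = JN \<alpha> a r" by (simp add: Jm_def JN_def uf)
  then show ?thesis using JN_finite[OF a0 ad, of a r] by (simp add: morrey_local_alt)
qed

lemma morrey_local_f_scale:
  fixes u :: "'a::euclidean_space \<Rightarrow> real"
  assumes uf: "\<And>y. ennreal (\<bar>u y\<bar> powr p) = Nf \<alpha> y" and a0: "0 < \<alpha>" and ad: "\<alpha> < real DIM('a)"
    and p: "0 < p" and q: "0 < q" and \<alpha>: "\<alpha> = real DIM('a) * p / q"
    and t: "0 < t" and r: "0 < r"
  shows "morrey_local u p q (t *\<^sub>R a) (t * r) = morrey_local u p q a r"
proof -
  define d where "d = real DIM('a)"
  define e where "e = 1/q - 1/p"
  define V1 where "V1 = measure lebesgue (ball (0::'a) 1)"
  define A where "A = enn2real (JN \<alpha> a r)"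
  have A0: "0 \<le> A" by (simp add: A_def)
  have V10: "0 \<le> V1" by (simp add: V1_def)
  have JA: "enn2real (JN \<alpha> (t *\<^sub>R a) (t * r)) = t powr (d - \<alpha>) * A"
    using t by (simp add: JN_scale A_def d_def enn2real_mult)
  have V: "measure lebesgue (ball (t *\<^sub>R a) (t * r)) = t ^ DIM('a) * (r ^ DIM('a) * V1)"
  proof -
    have "measure lebesgue (ball (t *\<^sub>R a) (t * r)) = (t*r) ^ DIM('a) * V1"
      unfolding V1_def by (rule vol_ball) (use t r in simp)
    then show ?thesis by (simp add: power_mult_distrib)
  qed
  have V': "measure lebesgue (ball a r) = r ^ DIM('a) * V1"
    unfolding V1_def by (rule vol_ball) (use r in simp)
  have ex: "d * e + (d - \<alpha>) * (1/p) = 0"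
    using p q by (simp add: \<alpha> e_def d_def field_simps)
  have ex': "d * e + (d - \<alpha>) / p = 0" using ex by simp
  have t1: "(t ^ DIM('a)) powr e = t powr (d * e)"
    using t by (simp add: powr_realpow[symmetric] powr_powr d_def)
  have t2: "(t powr (d - \<alpha>)) powr (1/p) = t powr ((d - \<alpha>) * (1/p))"
    by (simp add: powr_powr)
  have t3: "t powr (d * e) * t powr ((d - \<alpha>) * (1/p)) = 1"
    unfolding powr_add[symmetric] ex using t by simp
  have "(t ^ DIM('a) * (r ^ DIM('a) * V1)) powr e * (t powr (d - \<alpha>) * A) powr (1/p)
      = (t powr (d * e) * t powr ((d - \<alpha>) * (1/p))) * ((r ^ DIM('a) * V1) powr e * A powr (1/p))"
    unfolding powr_mult t1 t2 by (simp add: ac_simps)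
  also have "\<dots> = (r ^ DIM('a) * V1) powr e * A powr (1/p)" unfolding t3 by simp
  finally show ?thesis
    using V V' JA by (simp add: morrey_local_f[OF uf a0 ad] A_def e_def)
qed



lemma h_ge:
  fixes f h :: "'a::euclidean_space \<Rightarrow> real"
  assumes uf: "\<And>y. ennreal (\<bar>f y\<bar> powr p) = Nf \<alpha> y"
    and hf: "\<And>y. 1 \<le> norm y \<Longrightarrow> h y = f y" and hle: "\<And>y. \<bar>h y\<bar> \<le> \<bar>f y\<bar>"
    and a0: "0 < \<alpha>" and ad: "\<alpha> < real DIM('a)"
    and p: "0 < p" and q: "0 < q" and \<alpha>: "\<alpha> = real DIM('a) * p / q"
    and r: "0 < r" and hm[measurable]: "h \<in> borel_measurable lebesgue"
  shows "morrey_local f p q a r \<le> morrey_norm h p q"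
proof -
  define d where "d = real DIM('a)"
  define e where "e = 1/q - 1/p"
  define Vr where "Vr = measure lebesgue (ball a r)"
  define A where "A = enn2real (JN \<alpha> a r)"
  define c where "c = enn2real (JN \<alpha> (0::'a) 1)"
  define G where "G t = Vr powr e * (max 0 (A - c * t powr (\<alpha> - d))) powr (1/p)" for t
  have A0: "0 \<le> A" by (simp add: A_def)
  have c0: "0 \<le> c" by (simp add: c_def)
  have JNA: "JN \<alpha> a r = ennreal A" using JN_finite[OF a0 ad, of a r]
    by (simp add: A_def top.not_eq_extremum)
  have JNc: "JN \<alpha> (0::'a) 1 = ennreal c" using JN_finite[OF a0 ad, of 0 1]
    by (simp add: c_def top.not_eq_extremum)
  have ex: "d * e = (\<alpha> - d) * (1/p)"
    using p q by (simp add: \<alpha> e_def d_def field_simps)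
  have ev: "G t \<le> morrey_norm h p q" if t: "0 < t" for t
  proof -
    define B where "B = ball (t *\<^sub>R a) (t * r)"
    define Jh where "Jh = Jm h p (t *\<^sub>R a) (t * r)"
    have "JN \<alpha> (t *\<^sub>R a) (t * r) \<le> (\<integral>\<^sup>+ y. ennreal (\<bar>h y\<bar> powr p) * indicator B y + Nf \<alpha> y * indicator (ball 0 1) y \<partial>lebesgue)"
      unfolding JN_def B_def[symmetric]
    proof (intro nn_integral_mono)
      fix y
      show "Nf \<alpha> y * indicator B y \<le> ennreal (\<bar>h y\<bar> powr p) * indicator B y + Nf \<alpha> y * indicator (ball 0 1) y"
      proof (cases "norm y < 1")
        case True
        then show ?thesis by (auto simp: indicator_def)
      next
        case False
        then have "h y = f y" using hf by simp
        then show ?thesis by (simp add: uf)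
      qed
    qed
    also have "\<dots> = Jh + JN \<alpha> (0::'a) 1"
      unfolding Jh_def Jm_def JN_def B_def
      by (simp add: nn_integral_add)
    finally have J1: "JN \<alpha> (t *\<^sub>R a) (t * r) \<le> Jh + JN \<alpha> (0::'a) 1" .
    have "Jh \<le> JN \<alpha> (t *\<^sub>R a) (t * r)"
      unfolding Jh_def Jm_def JN_def
      by (intro nn_integral_mono mult_right_mono) (auto simp: uf[symmetric] intro!: ennreal_leI powr_mono2 hle p[THEN less_imp_le])
    then have Jhfin: "Jh < \<infinity>" using JN_finite[OF a0 ad, of "t *\<^sub>R a" "t * r"] by auto
    define jh where "jh = enn2real Jh"
    have jh0: "0 \<le> jh" by (simp add: jh_def)
    have Jhj: "Jh = ennreal jh" using Jhfin by (simp add: jh_def top.not_eq_extremum)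
    have "ennreal (t powr (d - \<alpha>) * A) \<le> ennreal (jh + c)"
      using J1 t A0 by (simp add: JN_scale JNA JNc Jhj d_def jh0 c0 flip: ennreal_plus ennreal_mult)
    then have J3: "t powr (d - \<alpha>) * A \<le> jh + c" using jh0 c0 by (metis ennreal_le_iff add_nonneg_nonneg)
    have ml: "morrey_local h p q (t *\<^sub>R a) (t * r) = ennreal ((t ^ DIM('a) * Vr) powr e * jh powr (1/p))"
    proof -
      have "measure lebesgue (ball (t *\<^sub>R a) (t * r)) = (t*r) ^ DIM('a) * measure lebesgue (ball (0::'a) 1)"
        by (rule vol_ball) (use t r in simp)
      moreover have "Vr = r ^ DIM('a) * measure lebesgue (ball (0::'a) 1)"
        unfolding Vr_def by (rule vol_ball) (use r in simp)
      ultimately have "measure lebesgue (ball (t *\<^sub>R a) (t * r)) = t ^ DIM('a) * Vr"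
        by (simp add: power_mult_distrib)
      then show ?thesis using Jhfin
        by (simp add: morrey_local_alt Jh_def[symmetric] jh_def e_def)
    qed
    have tp: "0 < t powr (\<alpha> - d)" using t by simp
    have "max 0 (A - c * t powr (\<alpha> - d)) \<le> jh * t powr (\<alpha> - d)"
    proof -
      have "(t powr (d - \<alpha>) * A) * t powr (\<alpha> - d) \<le> (jh + c) * t powr (\<alpha> - d)"
        using J3 tp by (intro mult_right_mono) auto
      moreover have "t powr (d - \<alpha>) * t powr (\<alpha> - d) = 1"
        using t by (simp add: powr_add[symmetric])
      ultimately have "A \<le> (jh + c) * t powr (\<alpha> - d)"
        by (metis (no_types, lifting) mult.assoc mult.commute mult_1)
      then show ?thesis using jh0 tp by (simp add: algebra_simps)
    qed
    then have "(max 0 (A - c * t powr (\<alpha> - d))) powr (1/p) \<le> (jh * t powr (\<alpha> - d)) powr (1/p)"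
      using p by (intro powr_mono2) auto
    also have "\<dots> = jh powr (1/p) * t powr ((\<alpha> - d) * (1/p))"
      by (simp add: powr_mult powr_powr)
    finally have X: "(max 0 (A - c * t powr (\<alpha> - d))) powr (1/p) \<le> jh powr (1/p) * t powr (d * e)"
      by (simp add: ex)
    have "G t \<le> Vr powr e * (jh powr (1/p) * t powr (d * e))"
      unfolding G_def using X by (intro mult_left_mono) auto
    also have "\<dots> = (t ^ DIM('a) * Vr) powr e * jh powr (1/p)"
      using t by (simp add: powr_mult powr_realpow[symmetric] powr_powr d_def)
    finally have "ennreal (G t) \<le> morrey_local h p q (t *\<^sub>R a) (t * r)"
      unfolding ml by (rule ennreal_leI)
    also have "\<dots> \<le> morrey_norm h p q"
      unfolding morrey_norm_def using t r
      by (intro SUP_upper2[of "t *\<^sub>R a"] SUP_upper2[of "t * r"]) auto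
    finally show ?thesis .
  qed
  have lim0: "((\<lambda>t. max 0 (A - c * t powr (\<alpha> - d))) \<longlongrightarrow> max 0 (A - c * 0)) at_top"
    by (intro tendsto_intros tendsto_neg_powr filterlim_ident) (use ad in \<open>simp add: d_def\<close>)
  have "((\<lambda>t. (max 0 (A - c * t powr (\<alpha> - d))) powr (1/p)) \<longlongrightarrow> (max 0 (A - c * 0)) powr (1/p)) at_top"
    by (rule tendsto_powr2[OF lim0]) (use p in auto)
  then have "(G \<longlongrightarrow> Vr powr e * A powr (1/p)) at_top"
    unfolding G_def using A0 by (auto intro: tendsto_mult_left)
  then have lim: "((\<lambda>t. ennreal (G t)) \<longlongrightarrow> ennreal (Vr powr e * A powr (1/p))) at_top"
    by (rule tendsto_ennrealI)
  have "ennreal (Vr powr e * A powr (1/p)) \<le> morrey_norm h p q"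
    by (rule tendsto_le[OF _ tendsto_const lim]) (auto intro: eventually_mono[OF eventually_gt_at_top[of 0]] ev)
  then show ?thesis
    by (simp add: morrey_local_f[OF uf a0 ad] Vr_def e_def A_def)
qed



lemma f_fin:
  fixes u :: "'a::euclidean_space \<Rightarrow> real"
  assumes uf: "\<And>y. ennreal (\<bar>u y\<bar> powr p) = Nf \<alpha> y" and a0: "0 < \<alpha>" and ad: "\<alpha> < real DIM('a)"
    and p: "0 < p" and q: "0 < q" and \<alpha>: "\<alpha> = real DIM('a) * p / q"
  shows "morrey_norm u p q < \<infinity>"
proof -
  define e where "e = 1/q - 1/p"
  define V1 where "V1 = measure lebesgue (ball (0::'a) 1)"
  define K where "K = max V1 (enn2real (JN \<alpha> (0::'a) 3))"
  have V10: "0 \<le> V1" by (simp add: V1_def)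
  have bnd: "morrey_local u p q b 1 \<le> ennreal (V1 powr e * K powr (1/p))" for b
  proof -
    have Vb: "measure lebesgue (ball b 1) = V1"
      unfolding V1_def using vol_ball[of 1 b] by simp
    have "enn2real (JN \<alpha> b 1) \<le> K"
    proof (cases "2 \<le> norm b")
      case True
      have "JN \<alpha> b 1 \<le> (\<integral>\<^sup>+y. indicator (ball b 1) y \<partial>lebesgue)"
        unfolding JN_def
      proof (intro nn_integral_mono)
        fix y
        show "Nf \<alpha> y * indicator (ball b 1) y \<le> indicator (ball b 1) y"
        proof (cases "y \<in> ball b 1")
          case True
          then have "dist b y < 1" by simp
          then have "1 \<le> norm y" using \<open>2 \<le> norm b\<close> norm_triangle_ineq2[of b y]
            by (simp add: dist_norm)
          then have "norm y powr (- \<alpha>) \<le> 1 powr (- \<alpha>)"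
            using a0 by (intro powr_mono2') auto
          then show ?thesis using True by (simp add: Nf_def)
        qed simp
      qed
      also have "\<dots> = ennreal V1" using Vb by (simp add: emeasure_ball_leb)
      finally have "enn2real (JN \<alpha> b 1) \<le> enn2real (ennreal V1)"
        by (intro enn2real_mono) auto
      then have "enn2real (JN \<alpha> b 1) \<le> V1" using V10 by simp
      then show ?thesis by (simp add: K_def)
    next
      case False
      have "ball b 1 \<subseteq> ball 0 3"
      proof
        fix y assume "y \<in> ball b 1"
        then have "dist b y < 1" by simp
        moreover have "norm y \<le> norm b + dist b y"
          by (metis dist_norm norm_minus_commute norm_triangle_sub add.commute)
        ultimately show "y \<in> ball 0 3" using False by simp
      qed
      then have "JN \<alpha> b 1 \<le> JN \<alpha> (0::'a) 3" by (rule JN_mono)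
      then have "enn2real (JN \<alpha> b 1) \<le> enn2real (JN \<alpha> (0::'a) 3)"
        using JN_finite[OF a0 ad, of 0 3] by (intro enn2real_mono) auto
      then show ?thesis by (simp add: K_def)
    qed
    then have "enn2real (JN \<alpha> b 1) powr (1/p) \<le> K powr (1/p)"
      using p by (intro powr_mono2) auto
    then show ?thesis
      by (simp add: morrey_local_f[OF uf a0 ad] Vb e_def ennreal_leI mult_left_mono)
  qed
  have "morrey_local u p q a r \<le> ennreal (V1 powr e * K powr (1/p))" if r: "0 < r" for a r
  proof -
    have "morrey_local u p q a r = morrey_local u p q (r *\<^sub>R ((1/r) *\<^sub>R a)) (r * 1)"
      using r by simp
    also have "\<dots> = morrey_local u p q ((1/r) *\<^sub>R a) 1"
      by (rule morrey_local_f_scale[OF uf a0 ad p q \<alpha> r]) simp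
    also have "\<dots> \<le> ennreal (V1 powr e * K powr (1/p))" by (rule bnd)
    finally show ?thesis .
  qed
  then have "morrey_norm u p q \<le> ennreal (V1 powr e * K powr (1/p))"
    unfolding morrey_norm_def by (intro SUP_least) auto
  also have "\<dots> < \<infinity>" by simp
  finally show ?thesis .
qed

lemma f_pos:
  fixes u :: "'a::euclidean_space \<Rightarrow> real"
  assumes uf: "\<And>y. ennreal (\<bar>u y\<bar> powr p) = Nf \<alpha> y" and a0: "0 < \<alpha>" and ad: "\<alpha> < real DIM('a)"
  shows "0 < morrey_norm u p q"
proof -
  obtain b0 :: 'a where b0: "b0 \<in> Basis" using nonempty_Basis by blast
  define a where "a = (1/2) *\<^sub>R b0"
  have na: "norm a = 1/2" using b0 by (simp add: a_def)
  define V where "V = measure lebesgue (ball a (1/4))"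
  have V0: "0 < V" unfolding V_def by (rule vol_ball_pos) simp
  have "(\<integral>\<^sup>+y. indicator (ball a (1/4)) y \<partial>lebesgue) \<le> JN \<alpha> a (1/4)"
    unfolding JN_def
  proof (intro nn_integral_mono)
    fix y
    show "indicator (ball a (1/4)) y \<le> Nf \<alpha> y * indicator (ball a (1/4)) y"
    proof (cases "y \<in> ball a (1/4)")
      case True
      then have "dist a y < 1/4" by simp
      then have y1: "norm y < 1" and y0: "0 < norm y"
        using na norm_triangle_ineq2[of a y] norm_triangle_ineq[of a "y - a"]
        by (auto simp: dist_norm norm_minus_commute)
      then have "1 powr (- \<alpha>) \<le> norm y powr (- \<alpha>)"
        using a0 by (intro powr_mono2') auto
      then show ?thesis using True by (simp add: Nf_def)
    qed simp
  qed
  then have "ennreal V \<le> JN \<alpha> a (1/4)" by (simp add: V_def emeasure_ball_leb)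
  then have "enn2real (ennreal V) \<le> enn2real (JN \<alpha> a (1/4))"
    using JN_finite[OF a0 ad, of a "1/4"] by (intro enn2real_mono) auto
  then have J: "V \<le> enn2real (JN \<alpha> a (1/4))" using V0 by simp
  have "0 < V powr (1/q - 1/p) * enn2real (JN \<alpha> a (1/4)) powr (1/p)"
    using V0 J by simp
  then have "0 < morrey_local u p q a (1/4)"
    by (simp add: morrey_local_f[OF uf a0 ad] V_def)
  also have "\<dots> \<le> morrey_norm u p q"
    unfolding morrey_norm_def by (intro SUP_upper2[of a] SUP_upper2[of "1/4"]) auto
  finally show ?thesis .
qed

lemma g_ge:
  fixes f g :: "'a::euclidean_space \<Rightarrow> real"
  assumes uf: "\<And>y. ennreal (\<bar>f y\<bar> powr p) = Nf \<alpha> y"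
    and gf: "\<And>y. norm y < 1 \<Longrightarrow> g y = f y"
    and a0: "0 < \<alpha>" and ad: "\<alpha> < real DIM('a)"
    and p: "0 < p" and q: "0 < q" and \<alpha>: "\<alpha> = real DIM('a) * p / q"
  shows "morrey_norm f p q \<le> morrey_norm g p q"
  unfolding morrey_norm_def
proof (intro SUP_least)
  fix a :: 'a and r :: real assume "r \<in> {0<..}"
  then have r: "0 < r" by simp
  define t where "t = 1 / (norm a + r)"
  have t: "0 < t" using r by (simp add: t_def add_nonneg_pos)
  have sub: "norm y < 1" if "y \<in> ball (t *\<^sub>R a) (t * r)" for y
  proof -
    have "norm y \<le> norm (t *\<^sub>R a) + dist (t *\<^sub>R a) y"
      by (metis dist_norm norm_minus_commute norm_triangle_sub add.commute)
    also have "\<dots> < t * norm a + t * r" using that t by simp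
    also have "\<dots> = 1"
    proof -
      have "norm a + r \<noteq> 0" using r by (smt (verit) norm_ge_zero)
      have "t * norm a + t * r = t * (norm a + r)" by (simp add: algebra_simps)
      also have "\<dots> = 1" using \<open>norm a + r \<noteq> 0\<close> by (simp add: t_def)
      finally show ?thesis .
    qed
    finally show ?thesis .
  qed
  have "morrey_local f p q a r = morrey_local f p q (t *\<^sub>R a) (t * r)"
    by (rule morrey_local_f_scale[OF uf a0 ad p q \<alpha> t r, symmetric])
  also have "\<dots> = morrey_local g p q (t *\<^sub>R a) (t * r)"
  proof -
    have "Jm f p (t *\<^sub>R a) (t * r) = Jm g p (t *\<^sub>R a) (t * r)"
      unfolding Jm_def
      by (intro nn_integral_cong) (auto simp: indicator_def gf sub)
    then show ?thesis by (simp add: morrey_local_alt)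
  qed
  also have "\<dots> \<le> (SUP a. SUP r\<in>{0<..}. morrey_local g p q a r)"
    using t r by (intro SUP_upper2[of "t *\<^sub>R a"] SUP_upper2[of "t * r"]) auto
  finally show "morrey_local f p q a r \<le> (SUP a. SUP r\<in>{0<..}. morrey_local g p q a r)" .
qed



theorem mainTheorem4:
  fixes p q :: real and f g h k :: "'a::euclidean_space \<Rightarrow> real"
  assumes "1 \<le> p" and "p < q"
    and "f = (\<lambda>x. norm x powr (- real DIM('a) / q))"
    and "g = (\<lambda>x. (if norm x < 1 then 1 else 0) * f x)"
    and "h = (\<lambda>x. f x - g x)"
    and "k = (\<lambda>x. - f x + 2 * g x)"
  shows "morrey_norm f p q = morrey_norm g p q \<and> morrey_norm g p q = morrey_norm h p q
         \<and> morrey_norm h p q = morrey_norm k p q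
         \<and> 0 < morrey_norm f p q \<and> morrey_norm f p q < \<infinity>"
proof -
  define d where "d = real DIM('a)"
  define \<alpha> where "\<alpha> = d * p / q"
  have p: "0 < p" and q: "0 < q" using assms(1,2) by auto
  have d1: "1 \<le> d" by (simp add: d_def DIM_positive Suc_le_eq)
  have a0: "0 < \<alpha>" using p q d1 by (simp add: \<alpha>_def)
  have ad: "\<alpha> < real DIM('a)"
  proof -
    have "d * p < d * q" using d1 assms(2) by simp
    then show ?thesis using q by (simp add: \<alpha>_def d_def pos_divide_less_eq)
  qed
  have \<alpha>': "\<alpha> = real DIM('a) * p / q" by (simp add: \<alpha>_def d_def)
  have ex: "- real DIM('a) / q * p = - \<alpha>" by (simp add: \<alpha>_def d_def)
  have uf: "ennreal (\<bar>f y\<bar> powr p) = Nf \<alpha> y" for y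
    by (simp add: assms(3) Nf_def powr_powr \<alpha>')
  have gf: "g y = f y" if "norm y < 1" for y using that by (simp add: assms(4))
  have hf: "h y = f y" if "1 \<le> norm y" for y using that by (simp add: assms(4,5))
  have gle: "\<bar>g y\<bar> \<le> \<bar>f y\<bar>" for y by (simp add: assms(4))
  have hle: "\<bar>h y\<bar> \<le> \<bar>f y\<bar>" for y by (simp add: assms(4,5))
  have absk: "\<bar>k y\<bar> = \<bar>f y\<bar>" for y by (simp add: assms(4,6))
  have hm: "h \<in> borel_measurable lebesgue"
    unfolding assms(5,4,3) by (intro measurable_completion) measurable
  have Mk: "morrey_norm k p q = morrey_norm f p q"
    unfolding morrey_norm_def morrey_local_def absk ..
  have Mg: "morrey_norm g p q = morrey_norm f p q"
    by (intro antisym morrey_norm_mono[OF p] gle g_ge[OF uf gf a0 ad p q \<alpha>'])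
  have Mh: "morrey_norm h p q = morrey_norm f p q"
  proof (rule antisym)
    show "morrey_norm h p q \<le> morrey_norm f p q" by (intro morrey_norm_mono[OF p] hle)
    show "morrey_norm f p q \<le> morrey_norm h p q"
      unfolding morrey_norm_def[of f]
      by (intro SUP_least h_ge[OF uf hf hle a0 ad p q \<alpha>' _ hm]) auto
  qed
  show ?thesis
    using Mk Mg Mh f_fin[OF uf a0 ad p q \<alpha>'] f_pos[OF uf a0 ad] by simp
qed


end
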